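(* Let $M$ be a CNM of size $n\ge 1$. Then there exist $N\ge 0$ and a sequence $M_0=M,M_1,\dots,M_N$ of CNMs of size $n$ such that for each $0\le i<N$, $M_{i+1}$ is obtained from $M_i$ by interchanging two rows or interchanging two columns, and $M_N$ is upper-diagonal.
   Context: A complete non-ambiguous matrix (CNM) of size $n$ is an $n\times n$ matrix $M=(m_{i,j})$ with entries in $\{0,1\}$ whose support $T=\{(i,j): m_{i,j}=1\}$ (whose elements are called vertices) satisfies: (1) $(1,1)\in T$; (2) for every $p=(i,j)\in T$ with $p\neq(1,1)$, exactly one of the following holds: there is $(i',j)\in T$ with $i'<i$, or there is $(i,j')\in T$ with $j'<j$; (3) every row and every column of $M$ contains at least one vertex; (4) define the parent of $p=(i,j)\neq(1,1)$ to be $(i',j)$ with $i'<i$ maximal if such a vertex exists, and otherwise $(i,j')$ with $j'<j$ maximal; then every vertex is the parent of either zero or exactly two vertices. A vertex with no children is a leaf. A CNM of size $n$ is upper-diagonal if its leaves are exactly the positions $(i,n+1-i)$, $1\le i\le n$. *)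

theory Defs
  imports Main "HOL-Combinatorics.Transposition"
begin

text \<open>An n x n 0/1 matrix is represented by its support T, a set of positions (i,j)
  with 1 <= i,j <= n (1-indexed rows and columns).\<close>

definition has_above :: "(nat \<times> nat) set \<Rightarrow> nat \<times> nat \<Rightarrow> bool" where
  "has_above T p = (\<exists>i'. i' < fst p \<and> (i', snd p) \<in> T)"

definition has_left :: "(nat \<times> nat) set \<Rightarrow> nat \<times> nat \<Rightarrow> bool" where
  "has_left T p = (\<exists>j'. j' < snd p \<and> (fst p, j') \<in> T)"

definition cnm_parent :: "(nat \<times> nat) set \<Rightarrow> nat \<times> nat \<Rightarrow> nat \<times> nat" where
  "cnm_parent T p =
     (if has_above T p
      then (GREATEST i'. i' < fst p \<and> (i', snd p) \<in> T, snd p)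
      else (fst p, GREATEST j'. j' < snd p \<and> (fst p, j') \<in> T))"

definition cnm_children :: "(nat \<times> nat) set \<Rightarrow> nat \<times> nat \<Rightarrow> (nat \<times> nat) set" where
  "cnm_children T p = {q \<in> T. q \<noteq> (1,1) \<and> cnm_parent T q = p}"

definition CNM :: "nat \<Rightarrow> (nat \<times> nat) set \<Rightarrow> bool" where
  "CNM n T \<longleftrightarrow>
     T \<subseteq> {1..n} \<times> {1..n}
   \<and> (1,1) \<in> T
   \<and> (\<forall>p\<in>T. p \<noteq> (1,1) \<longrightarrow> (has_above T p \<noteq> has_left T p))
   \<and> (\<forall>i\<in>{1..n}. \<exists>j. (i,j) \<in> T)
   \<and> (\<forall>j\<in>{1..n}. \<exists>i. (i,j) \<in> T)
   \<and> (\<forall>p\<in>T. card (cnm_children T p) = 0 \<or> card (cnm_children T p) = 2)"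

definition cnm_leaves :: "(nat \<times> nat) set \<Rightarrow> (nat \<times> nat) set" where
  "cnm_leaves T = {p \<in> T. cnm_children T p = {}}"

definition upper_diagonal_CNM :: "nat \<Rightarrow> (nat \<times> nat) set \<Rightarrow> bool" where
  "upper_diagonal_CNM n T \<longleftrightarrow> CNM n T \<and> cnm_leaves T = {(i, n + 1 - i) | i. i \<in> {1..n}}"

definition swap_rows :: "nat \<Rightarrow> nat \<Rightarrow> (nat \<times> nat) set \<Rightarrow> (nat \<times> nat) set" where
  "swap_rows a b T = (\<lambda>(i,j). (transpose a b i, j)) ` T"

definition swap_cols :: "nat \<Rightarrow> nat \<Rightarrow> (nat \<times> nat) set \<Rightarrow> (nat \<times> nat) set" where
  "swap_cols a b T = (\<lambda>(i,j). (i, transpose a b j)) ` T"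

definition row_or_col_swap :: "nat \<Rightarrow> (nat \<times> nat) set \<Rightarrow> (nat \<times> nat) set \<Rightarrow> bool" where
  "row_or_col_swap n T T' \<longleftrightarrow>
     (\<exists>a\<in>{1..n}. \<exists>b\<in>{1..n}. a \<noteq> b \<and> (T' = swap_rows a b T \<or> T' = swap_cols a b T))"

end

theory Submission
  imports Defs "HOL-Library.List_Lexorder" "HOL-Library.Product_Lexorder"
begin


lemma CNM_bounds:
  assumes "CNM n T" "(i,j) \<in> T" shows "1 \<le> i" "i \<le> n" "1 \<le> j" "j \<le> n"
  using assms unfolding CNM_def by auto

lemma CNM_finite: assumes "CNM n T" shows "finite T"
  using assms unfolding CNM_def by (meson finite_SigmaI finite_atLeastAtMost finite_subset)

lemma CNM_root: "CNM n T \<Longrightarrow> (1,1) \<in> T" by (simp add: CNM_def)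

lemma CNM_excl: "CNM n T \<Longrightarrow> p \<in> T \<Longrightarrow> p \<noteq> (1,1) \<Longrightarrow> has_above T p \<noteq> has_left T p"
  by (simp add: CNM_def)

lemma CNM_card: "CNM n T \<Longrightarrow> p \<in> T \<Longrightarrow> card (cnm_children T p) = 0 \<or> card (cnm_children T p) = 2"
  by (simp add: CNM_def)

lemma parent_above:
  assumes "has_above T (i,j)"
  obtains g where "cnm_parent T (i,j) = (g,j)" "g < i" "(g,j) \<in> T" "\<And>i'. i' < i \<Longrightarrow> (i',j) \<in> T \<Longrightarrow> i' \<le> g"
proof -
  let ?P = "\<lambda>i'. i' < i \<and> (i',j) \<in> T"
  obtain i0 where i0: "?P i0" using assms by (auto simp: has_above_def)
  have b: "\<And>y. ?P y \<Longrightarrow> y \<le> i" by auto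
  have "?P (Greatest ?P)" using GreatestI_nat[of ?P i0 i, OF i0 b] .
  moreover have "\<And>i'. ?P i' \<Longrightarrow> i' \<le> Greatest ?P"
  proof -
    fix i' assume "?P i'" then show "i' \<le> Greatest ?P" by (rule Greatest_le_nat[of ?P i' i, OF _ b])
  qed
  moreover have "cnm_parent T (i,j) = (Greatest ?P, j)" using assms by (simp add: cnm_parent_def)
  ultimately show ?thesis using that by blast
qed

lemma parent_left:
  assumes "\<not> has_above T (i,j)" "has_left T (i,j)"
  obtains g where "cnm_parent T (i,j) = (i,g)" "g < j" "(i,g) \<in> T" "\<And>j'. j' < j \<Longrightarrow> (i,j') \<in> T \<Longrightarrow> j' \<le> g"
proof -
  let ?P = "\<lambda>j'. j' < j \<and> (i,j') \<in> T"
  obtain j0 where j0: "?P j0" using assms by (auto simp: has_left_def)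
  have b: "\<And>y. ?P y \<Longrightarrow> y \<le> j" by auto
  have "?P (Greatest ?P)" using GreatestI_nat[of ?P j0 j, OF j0 b] .
  moreover have "\<And>j'. ?P j' \<Longrightarrow> j' \<le> Greatest ?P"
  proof -
    fix j' assume "?P j'" then show "j' \<le> Greatest ?P" by (rule Greatest_le_nat[of ?P j' j, OF _ b])
  qed
  moreover have "cnm_parent T (i,j) = (i, Greatest ?P)" using assms by (simp add: cnm_parent_def)
  ultimately show ?thesis using that by blast
qed

lemma child_below:
  assumes "CNM n T" "(r,c) \<in> T" "(s,c) \<in> T" "r < s" "\<forall>x. r < x \<and> x < s \<longrightarrow> (x,c) \<notin> T"
  shows "(s,c) \<in> cnm_children T (r,c)"
proof -
  have ne: "(s,c) \<noteq> (1,1)" using CNM_bounds[OF assms(1,2)] assms(4) by auto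
  have ha: "has_above T (s,c)" using assms(2,4) by (auto simp: has_above_def)
  obtain g where g: "cnm_parent T (s,c) = (g,c)" "g < s" "(g,c) \<in> T" "\<And>i'. i' < s \<Longrightarrow> (i',c) \<in> T \<Longrightarrow> i' \<le> g"
    using parent_above[OF ha] by blast
  have "r \<le> g" using g(4)[OF assms(4,2)] .
  moreover have "\<not> r < g" using assms(5) g(2,3) by blast
  ultimately have "g = r" by simp
  then show ?thesis using g(1) ne assms(3) by (simp add: cnm_children_def)
qed

lemma child_right:
  assumes "CNM n T" "(r,c) \<in> T" "(r,d) \<in> T" "c < d" "\<forall>y. c < y \<and> y < d \<longrightarrow> (r,y) \<notin> T"
  shows "(r,d) \<in> cnm_children T (r,c)"
proof -
  have ne: "(r,d) \<noteq> (1,1)" using CNM_bounds[OF assms(1,2)] assms(4) by auto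
  have hl: "has_left T (r,d)" using assms(2,4) by (auto simp: has_left_def)
  have na: "\<not> has_above T (r,d)" using CNM_excl[OF assms(1,3) ne] hl by simp
  obtain g where g: "cnm_parent T (r,d) = (r,g)" "g < d" "(r,g) \<in> T" "\<And>j'. j' < d \<Longrightarrow> (r,j') \<in> T \<Longrightarrow> j' \<le> g"
    using parent_left[OF na hl] by blast
  have "c \<le> g" using g(4)[OF assms(4,2)] .
  moreover have "\<not> c < g" using assms(5) g(2,3) by blast
  ultimately have "g = c" by simp
  then show ?thesis using g(1) ne assms(3) by (simp add: cnm_children_def)
qed

lemma children_shape:
  assumes "CNM n T" "q \<in> cnm_children T (r,c)"
  shows "(snd q = c \<and> r < fst q \<and> (\<forall>x. r < x \<and> x < fst q \<longrightarrow> (x,c) \<notin> T))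
       \<or> (fst q = r \<and> c < snd q \<and> (\<forall>y. c < y \<and> y < snd q \<longrightarrow> (r,y) \<notin> T))"
proof -
  obtain a b where q: "q = (a,b)" by (cases q)
  have qT: "(a,b) \<in> T" and ne: "(a,b) \<noteq> (1,1)" and par: "cnm_parent T (a,b) = (r,c)"
    using assms(2) q by (auto simp: cnm_children_def)
  show ?thesis
  proof (cases "has_above T (a,b)")
    case True
    obtain g where g: "cnm_parent T (a,b) = (g,b)" "g < a" "(g,b) \<in> T" "\<And>i'. i' < a \<Longrightarrow> (i',b) \<in> T \<Longrightarrow> i' \<le> g"
      using parent_above[OF True] by blast
    have "g = r" "b = c" using g(1) par by auto
    then show ?thesis using g q by force
  next
    case False
    then have hl: "has_left T (a,b)" using CNM_excl[OF assms(1) qT ne] by simp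
    obtain g where g: "cnm_parent T (a,b) = (a,g)" "g < b" "(a,g) \<in> T" "\<And>j'. j' < b \<Longrightarrow> (a,j') \<in> T \<Longrightarrow> j' \<le> g"
      using parent_left[OF False hl] by blast
    have "g = c" "a = r" using g(1) par by auto
    then show ?thesis using g q by force
  qed
qed

lemma children_finite: "CNM n T \<Longrightarrow> finite (cnm_children T p)"
  using CNM_finite by (metis (no_types, lifting) cnm_children_def finite_subset mem_Collect_eq subsetI)

lemma internal:
  assumes "CNM n T" "(r,c) \<in> T" "cnm_children T (r,c) \<noteq> {}"
  shows "\<exists>a. r < a \<and> (a,c) \<in> T" "\<exists>b. c < b \<and> (r,b) \<in> T"
proof -
  have "card (cnm_children T (r,c)) \<noteq> 0" using assms(3) children_finite[OF assms(1)] by simp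
  then have "card (cnm_children T (r,c)) = 2" using CNM_card[OF assms(1,2)] by simp
  then obtain q q' where qq: "cnm_children T (r,c) = {q,q'}" "q \<noteq> q'" by (auto simp: card_2_iff)
  obtain a1 b1 where q: "q = (a1,b1)" by (cases q)
  obtain a2 b2 where q': "q' = (a2,b2)" by (cases q')
  have sq: "(a1,b1) \<in> cnm_children T (r,c)" "(a2,b2) \<in> cnm_children T (r,c)" using qq q q' by auto
  have inT: "(a1,b1) \<in> T" "(a2,b2) \<in> T" using sq by (auto simp: cnm_children_def)
  have s1: "(b1 = c \<and> r < a1 \<and> (\<forall>x. r < x \<and> x < a1 \<longrightarrow> (x,c) \<notin> T))
       \<or> (a1 = r \<and> c < b1 \<and> (\<forall>y. c < y \<and> y < b1 \<longrightarrow> (r,y) \<notin> T))"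
    using children_shape[OF assms(1) sq(1)] by simp
  have s2: "(b2 = c \<and> r < a2 \<and> (\<forall>x. r < x \<and> x < a2 \<longrightarrow> (x,c) \<notin> T))
       \<or> (a2 = r \<and> c < b2 \<and> (\<forall>y. c < y \<and> y < b2 \<longrightarrow> (r,y) \<notin> T))"
    using children_shape[OF assms(1) sq(2)] by simp
  have ne: "(a1,b1) \<noteq> (a2,b2)" using qq(2) q q' by simp
  have nbb: False if "b1 = c \<and> r < a1 \<and> (\<forall>x. r < x \<and> x < a1 \<longrightarrow> (x,c) \<notin> T)"
     "b2 = c \<and> r < a2 \<and> (\<forall>x. r < x \<and> x < a2 \<longrightarrow> (x,c) \<notin> T)"
  proof -
    have "\<not> a1 < a2" using that inT by blast
    moreover have "\<not> a2 < a1" using that inT by blast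
    ultimately have "a1 = a2" by simp
    then show False using that ne by simp
  qed
  have nrr: False if "a1 = r \<and> c < b1 \<and> (\<forall>y. c < y \<and> y < b1 \<longrightarrow> (r,y) \<notin> T)"
     "a2 = r \<and> c < b2 \<and> (\<forall>y. c < y \<and> y < b2 \<longrightarrow> (r,y) \<notin> T)"
  proof -
    have "\<not> b1 < b2" using that inT by blast
    moreover have "\<not> b2 < b1" using that inT by blast
    ultimately have "b1 = b2" by simp
    then show False using that ne by simp
  qed
  show "\<exists>a. r < a \<and> (a,c) \<in> T"
    using s1 s2 nbb nrr inT by blast
  show "\<exists>b. c < b \<and> (r,b) \<in> T"
    using s1 s2 nbb nrr inT by blast
qed

lemma below_child_ex:
  assumes "CNM n T" "(r,c) \<in> T" "(s,c) \<in> T" "r < s"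
  shows "cnm_children T (r,c) \<noteq> {}"
proof -
  let ?P = "\<lambda>x. r < x \<and> (x,c) \<in> T"
  have P: "?P (Least ?P)" using LeastI[of ?P s] assms by blast
  have nb: "\<forall>x. r < x \<and> x < Least ?P \<longrightarrow> (x,c) \<notin> T" using not_less_Least by blast
  show ?thesis using child_below[OF assms(1,2) conjunct2[OF P] conjunct1[OF P] nb] by blast
qed

lemma right_child_ex:
  assumes "CNM n T" "(r,c) \<in> T" "(r,d) \<in> T" "c < d"
  shows "cnm_children T (r,c) \<noteq> {}"
proof -
  let ?P = "\<lambda>y. c < y \<and> (r,y) \<in> T"
  have P: "?P (Least ?P)" using LeastI[of ?P d] assms by blast
  have nb: "\<forall>y. c < y \<and> y < Least ?P \<longrightarrow> (r,y) \<notin> T" using not_less_Least by blast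
  show ?thesis using child_right[OF assms(1,2) conjunct2[OF P] conjunct1[OF P] nb] by blast
qed

lemma exists_right:
  assumes "CNM n T" "(r,c) \<in> T" "(s,c) \<in> T" "r < s" shows "\<exists>b. c < b \<and> (r,b) \<in> T"
  using internal(2)[OF assms(1,2) below_child_ex[OF assms]] .

lemma exists_below:
  assumes "CNM n T" "(r,c) \<in> T" "(r,d) \<in> T" "c < d" shows "\<exists>a. r < a \<and> (a,c) \<in> T"
  using internal(1)[OF assms(1,2) right_child_ex[OF assms]] .



function path :: "(nat \<times> nat) set \<Rightarrow> nat \<times> nat \<Rightarrow> bool list" where
  "path T p = (if p \<in> T \<and> p \<noteq> (1,1) \<and> (has_above T p \<or> has_left T p)
     then path T (cnm_parent T p) @ [\<not> has_above T p] else [])"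
  by auto
termination
proof (relation "measure (\<lambda>(T,p). fst p + snd p)")
  show "wf (measure (\<lambda>(T,p). fst p + snd p))" by simp
next
  fix T :: "(nat \<times> nat) set" and p :: "nat \<times> nat"
  assume h: "p \<in> T \<and> p \<noteq> (1,1) \<and> (has_above T p \<or> has_left T p)"
  obtain i j where p: "p = (i,j)" by (cases p)
  show "((T, cnm_parent T p), (T, p)) \<in> measure (\<lambda>(T,p). fst p + snd p)"
  proof (cases "has_above T p")
    case True
    then obtain g where "cnm_parent T (i,j) = (g,j)" "g < i" using parent_above p by metis
    then show ?thesis using p by simp
  next
    case False
    then have "has_left T p" using h by simp
    then obtain g where "cnm_parent T (i,j) = (i,g)" "g < j" using parent_left p False by metis
    then show ?thesis using p by simp
  qed
qed

declare path.simps[simp del]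

lemma path_step:
  assumes "CNM n T" "p \<in> T" "p \<noteq> (1,1)"
  shows "path T p = path T (cnm_parent T p) @ [\<not> has_above T p]"
proof -
  have "has_above T p \<or> has_left T p" using CNM_excl[OF assms] by auto
  then show ?thesis using assms(2,3) by (subst path.simps) simp
qed

lemma row_chain:
  assumes "CNM n T" "(r,c) \<in> T"
  shows "(r,d) \<in> T \<Longrightarrow> c < d \<Longrightarrow> \<exists>B. path T (r,d) = path T (r,c) @ True # B"
proof (induction d rule: less_induct)
  case (less d)
  have ne: "(r,d) \<noteq> (1,1)" using CNM_bounds[OF assms] less.prems by auto
  have hl: "has_left T (r,d)" using assms(2) less.prems by (auto simp: has_left_def)
  have na: "\<not> has_above T (r,d)" using CNM_excl[OF assms(1) less.prems(1) ne] hl by simp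
  obtain g where g: "cnm_parent T (r,d) = (r,g)" "g < d" "(r,g) \<in> T" "\<And>j'. j' < d \<Longrightarrow> (r,j') \<in> T \<Longrightarrow> j' \<le> g"
    using parent_left[OF na hl] by blast
  have cg: "c \<le> g" using g(4)[OF less.prems(2) assms(2)] .
  have ps: "path T (r,d) = path T (r,g) @ [True]" using path_step[OF assms(1) less.prems(1) ne] g(1) na by simp
  show ?case
  proof (cases "c = g")
    case True then show ?thesis using ps by auto
  next
    case False then have "c < g" using cg by simp
    from less.IH[OF g(2) g(3) this] obtain B where "path T (r,g) = path T (r,c) @ True # B" by blast
    then show ?thesis using ps by auto
  qed
qed

lemma col_chain:
  assumes "CNM n T" "(r,c) \<in> T"
  shows "(s,c) \<in> T \<Longrightarrow> r < s \<Longrightarrow> \<exists>B. path T (s,c) = path T (r,c) @ False # B"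
proof (induction s rule: less_induct)
  case (less s)
  have ne: "(s,c) \<noteq> (1,1)" using CNM_bounds[OF assms] less.prems by auto
  have ha: "has_above T (s,c)" using assms(2) less.prems by (auto simp: has_above_def)
  obtain g where g: "cnm_parent T (s,c) = (g,c)" "g < s" "(g,c) \<in> T" "\<And>i'. i' < s \<Longrightarrow> (i',c) \<in> T \<Longrightarrow> i' \<le> g"
    using parent_above[OF ha] by blast
  have rg: "r \<le> g" using g(4)[OF less.prems(2) assms(2)] .
  have ps: "path T (s,c) = path T (g,c) @ [False]" using path_step[OF assms(1) less.prems(1) ne] g(1) ha by simp
  show ?case
  proof (cases "r = g")
    case True then show ?thesis using ps by auto
  next
    case False then have "r < g" using rg by simp
    from less.IH[OF g(2) g(3) this] obtain B where "path T (g,c) = path T (r,c) @ False # B" by blast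
    then show ?thesis using ps by auto
  qed
qed

lemma lex_split: "(P @ False # X :: bool list) < P @ True # Y"
  by (induction P) auto

definition rmax :: "(nat \<times> nat) set \<Rightarrow> nat \<Rightarrow> nat" where
  "rmax T r = Max {c. (r,c) \<in> T}"
definition cmax :: "(nat \<times> nat) set \<Rightarrow> nat \<Rightarrow> nat" where
  "cmax T c = Max {r. (r,c) \<in> T}"

lemma rmax_props:
  assumes "CNM n T" "(r,c) \<in> T"
  shows "(r, rmax T r) \<in> T" "c \<le> rmax T r"
proof -
  have fin: "finite {c. (r,c) \<in> T}"
    using finite_subset[of "{c. (r,c) \<in> T}" "snd ` T"] CNM_finite[OF assms(1)] by force
  have ne: "{c. (r,c) \<in> T} \<noteq> {}" using assms(2) by auto
  show "(r, rmax T r) \<in> T" using Max_in[OF fin ne] by (simp add: rmax_def)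
  show "c \<le> rmax T r" using Max_ge[OF fin] assms(2) by (simp add: rmax_def)
qed

lemma cmax_props:
  assumes "CNM n T" "(r,c) \<in> T"
  shows "(cmax T c, c) \<in> T" "r \<le> cmax T c"
proof -
  have fin: "finite {r. (r,c) \<in> T}"
    using finite_subset[of "{r. (r,c) \<in> T}" "fst ` T"] CNM_finite[OF assms(1)] by force
  have ne: "{r. (r,c) \<in> T} \<noteq> {}" using assms(2) by auto
  show "(cmax T c, c) \<in> T" using Max_in[OF fin ne] by (simp add: cmax_def)
  show "r \<le> cmax T c" using Max_ge[OF fin] assms(2) by (simp add: cmax_def)
qed

lemma key_rows:
  assumes "CNM n T" "r < s" "(r,c) \<in> T" "(s,c) \<in> T"
  shows "path T (s, rmax T s) < path T (r, rmax T r)"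
proof -
  obtain b where b: "c < b" "(r,b) \<in> T" using exists_right[OF assms(1,3,4,2)] by blast
  have "c < rmax T r" using rmax_props(2)[OF assms(1) b(2)] b(1) by simp
  then obtain B1 where B1: "path T (r, rmax T r) = path T (r,c) @ True # B1"
    using row_chain[OF assms(1,3) rmax_props(1)[OF assms(1,3)]] by blast
  obtain B2 where B2: "path T (s,c) = path T (r,c) @ False # B2"
    using col_chain[OF assms(1,3,4,2)] by blast
  have "\<exists>B. path T (s, rmax T s) = path T (r,c) @ False # B"
  proof (cases "c = rmax T s")
    case True then show ?thesis using B2 by auto
  next
    case False
    then have "c < rmax T s" using rmax_props(2)[OF assms(1,4)] by simp
    then obtain B3 where "path T (s, rmax T s) = path T (s,c) @ True # B3"
      using row_chain[OF assms(1,4) rmax_props(1)[OF assms(1,4)]] by blast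
    then show ?thesis using B2 by auto
  qed
  then obtain B where "path T (s, rmax T s) = path T (r,c) @ False # B" by blast
  then show ?thesis using B1 lex_split by simp
qed

lemma key_cols:
  assumes "CNM n T" "c < d" "(r,c) \<in> T" "(r,d) \<in> T"
  shows "path T (cmax T c, c) < path T (cmax T d, d)"
proof -
  obtain a where a: "r < a" "(a,c) \<in> T" using exists_below[OF assms(1,3,4,2)] by blast
  have "r < cmax T c" using cmax_props(2)[OF assms(1) a(2)] a(1) by simp
  then obtain B1 where B1: "path T (cmax T c, c) = path T (r,c) @ False # B1"
    using col_chain[OF assms(1,3) cmax_props(1)[OF assms(1,3)]] by blast
  obtain B2 where B2: "path T (r,d) = path T (r,c) @ True # B2"
    using row_chain[OF assms(1,3,4,2)] by blast
  have "\<exists>B. path T (cmax T d, d) = path T (r,c) @ True # B"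
  proof (cases "r = cmax T d")
    case True then show ?thesis using B2 by auto
  next
    case False
    then have "r < cmax T d" using cmax_props(2)[OF assms(1,4)] by simp
    then obtain B3 where "path T (cmax T d, d) = path T (r,d) @ False # B3"
      using col_chain[OF assms(1,4) cmax_props(1)[OF assms(1,4)]] by blast
    then show ?thesis using B2 by auto
  qed
  then obtain B where "path T (cmax T d, d) = path T (r,c) @ True # B" by blast
  then show ?thesis using B1 lex_split by simp
qed

lemma rightmost_bottom:
  assumes "CNM n T" "(r,c) \<in> T" "\<forall>c'. (r,c') \<in> T \<longrightarrow> c' \<le> c" "(r',c) \<in> T"
  shows "r' \<le> r"
proof (rule ccontr)
  assume "\<not> r' \<le> r"
  then have "r < r'" by simp
  then obtain b where "c < b" "(r,b) \<in> T" using exists_right[OF assms(1,2,4)] by blast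
  then show False using assms(3) by force
qed

lemma leaf_iff:
  assumes "CNM n T" "(r,c) \<in> T"
  shows "(r,c) \<in> cnm_leaves T \<longleftrightarrow> (\<forall>c'. (r,c') \<in> T \<longrightarrow> c' \<le> c)"
proof
  assume l: "(r,c) \<in> cnm_leaves T"
  show "\<forall>c'. (r,c') \<in> T \<longrightarrow> c' \<le> c"
  proof (intro allI impI, rule ccontr)
    fix c' assume "(r,c') \<in> T" "\<not> c' \<le> c"
    then have "cnm_children T (r,c) \<noteq> {}" using right_child_ex[OF assms] by simp
    then show False using l by (simp add: cnm_leaves_def)
  qed
next
  assume h: "\<forall>c'. (r,c') \<in> T \<longrightarrow> c' \<le> c"
  show "(r,c) \<in> cnm_leaves T"
  proof (rule ccontr)
    assume "(r,c) \<notin> cnm_leaves T"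
    then have "cnm_children T (r,c) \<noteq> {}" using assms(2) by (simp add: cnm_leaves_def)
    then obtain b where "c < b" "(r,b) \<in> T" using internal(2)[OF assms] by blast
    then show False using h by force
  qed
qed

lemma rows_share_12:
  assumes "CNM n T" "2 \<le> n"
  shows "\<exists>c. (1,c) \<in> T \<and> (2,c) \<in> T"
proof -
  have "(2::nat) \<in> {1..n}" using assms(2) by simp
  then obtain j where j: "(2,j) \<in> T" using assms(1) unfolding CNM_def by blast
  let ?P = "\<lambda>y. (2::nat,y) \<in> T"
  have P: "?P (Least ?P)" using LeastI[of ?P j] j by blast
  have nl: "\<not> has_left T (2, Least ?P)" unfolding has_left_def using not_less_Least by fastforce
  have ne: "(2::nat, Least ?P) \<noteq> (1,1)" by simp
  have "has_above T (2, Least ?P)" using CNM_excl[OF assms(1) P ne] nl by simp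
  then obtain i where "i < 2" "(i, Least ?P) \<in> T" unfolding has_above_def by auto
  moreover then have "1 \<le> i" using CNM_bounds[OF assms(1)] by blast
  ultimately have "i = 1" by simp
  then show ?thesis using P \<open>(i, Least ?P) \<in> T\<close> by blast
qed

lemma cols_share_12:
  assumes "CNM n T" "2 \<le> n"
  shows "\<exists>r. (r,1) \<in> T \<and> (r,2) \<in> T"
proof -
  have "(2::nat) \<in> {1..n}" using assms(2) by simp
  then obtain i where i: "(i,2) \<in> T" using assms(1) unfolding CNM_def by blast
  let ?P = "\<lambda>x. (x,2::nat) \<in> T"
  have P: "?P (Least ?P)" using LeastI[of ?P i] i by blast
  have na: "\<not> has_above T (Least ?P, 2)" unfolding has_above_def using not_less_Least by fastforce
  have ne: "(Least ?P, 2::nat) \<noteq> (1,1)" by simp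
  have "has_left T (Least ?P, 2)" using CNM_excl[OF assms(1) P ne] na by simp
  then obtain j where "j < 2" "(Least ?P, j) \<in> T" unfolding has_left_def by auto
  moreover then have "1 \<le> j" using CNM_bounds[OF assms(1)] by blast
  ultimately have "j = 1" by simp
  then show ?thesis using P \<open>(Least ?P, j) \<in> T\<close> by blast
qed



lemma CNM_rowmap:
  assumes T: "CNM n T" and inv: "\<And>x. f (f x) = x" and f1: "f 1 = 1"
    and fr: "\<And>x. x \<in> {1..n} \<Longrightarrow> f x \<in> {1..n}"
    and op: "\<And>i i' j. (i,j) \<in> T \<Longrightarrow> (i',j) \<in> T \<Longrightarrow> (i < i' \<longleftrightarrow> f i < f i')"
  shows "CNM n ((\<lambda>(i,j). (f i, j)) ` T)"
proof -
  define F where "F = (\<lambda>(i,j). (f i, j::nat))"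
  define T' where "T' = F ` T"
  have FF: "\<And>p. F (F p) = p" by (auto simp: F_def inv split: prod.splits)
  have imgF: "\<And>q S. q \<in> F ` S \<longleftrightarrow> F q \<in> S" by (metis FF image_eqI imageE)
  have memij: "\<And>x j. (x,j) \<in> T' \<longleftrightarrow> (f x, j) \<in> T" unfolding T'_def using imgF by (simp add: F_def)
  have injF: "inj F" by (metis FF injI)
  have f1iff: "\<And>x. f x = 1 \<longleftrightarrow> x = 1" by (metis f1 inv)
  have ha: "has_above T' (x,j) \<longleftrightarrow> has_above T (f x, j)" if xj: "(x,j) \<in> T'" for x j
  proof -
    have xjT: "(f x, j) \<in> T" using xj memij by simp
    show ?thesis
    proof
      assume "has_above T' (x,j)"
      then obtain i' where i': "i' < x" "(i',j) \<in> T'" by (auto simp: has_above_def)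
      then have fi': "(f i', j) \<in> T" using memij by simp
      have "f i' < f x" using op[OF fi' xjT] i'(1) inv by simp
      then show "has_above T (f x, j)" using fi' by (auto simp: has_above_def)
    next
      assume "has_above T (f x, j)"
      then obtain i0 where i0: "i0 < f x" "(i0,j) \<in> T" by (auto simp: has_above_def)
      then have "(f i0, j) \<in> T'" using memij inv by simp
      moreover have "f i0 < x" using op[OF i0(2) xjT] i0(1) inv by simp
      ultimately show "has_above T' (x,j)" by (auto simp: has_above_def)
    qed
  qed
  have hl: "\<And>x j. has_left T' (x,j) \<longleftrightarrow> has_left T (f x, j)" by (simp add: has_left_def memij)
  have par: "cnm_parent T' (x,j) = F (cnm_parent T (f x, j))" if xj: "(x,j) \<in> T'" and ne: "(x,j) \<noteq> (1,1)" for x j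
  proof -
    have xjT: "(f x, j) \<in> T" using xj memij by simp
    have neT: "(f x, j) \<noteq> (1,1)" using ne f1iff by simp
    show ?thesis
    proof (cases "has_above T (f x, j)")
      case True
      then have True': "has_above T' (x,j)" using ha[OF xj] by simp
      obtain g where g: "cnm_parent T (f x, j) = (g,j)" "g < f x" "(g,j) \<in> T" "\<And>i'. i' < f x \<Longrightarrow> (i',j) \<in> T \<Longrightarrow> i' \<le> g"
        using parent_above[OF True] by blast
      obtain g' where g': "cnm_parent T' (x,j) = (g',j)" "g' < x" "(g',j) \<in> T'" "\<And>i'. i' < x \<Longrightarrow> (i',j) \<in> T' \<Longrightarrow> i' \<le> g'"
        using parent_above[OF True'] by blast
      have "(f g, j) \<in> T'" using memij inv g(3) by simp
      moreover have "f g < x" using op[OF g(3) xjT] g(2) inv by simp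
      ultimately have le1: "f g \<le> g'" using g'(4) by blast
      have fg'T: "(f g', j) \<in> T" using memij g'(3) by simp
      have "f g' < f x" using op[OF fg'T xjT] g'(2) inv by simp
      then have fg'g: "f g' \<le> g" using g(4) fg'T by blast
      have "g' \<le> f g"
      proof (cases "f g' = g")
        case True then show ?thesis using inv by (metis order_refl)
      next
        case False then have "f g' < g" using fg'g by simp
        then have "f (f g') < f g" using op[OF fg'T g(3)] by simp
        then show ?thesis using inv by simp
      qed
      then have "g' = f g" using le1 by simp
      then show ?thesis using g g' by (simp add: F_def)
    next
      case False
      then have F': "\<not> has_above T' (x,j)" using ha[OF xj] by simp
      have hlT: "has_left T (f x, j)" using CNM_excl[OF T xjT neT] False by simp
      then have hl': "has_left T' (x,j)" using hl by simp
      obtain g where g: "cnm_parent T (f x, j) = (f x, g)" "g < j" "(f x, g) \<in> T" "\<And>j'. j' < j \<Longrightarrow> (f x, j') \<in> T \<Longrightarrow> j' \<le> g"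
        using parent_left[OF False hlT] by blast
      obtain g' where g': "cnm_parent T' (x,j) = (x,g')" "g' < j" "(x,g') \<in> T'" "\<And>j'. j' < j \<Longrightarrow> (x,j') \<in> T' \<Longrightarrow> j' \<le> g'"
        using parent_left[OF F' hl'] by blast
      have "g \<le> g'" using g'(4)[OF g(2)] g(3) memij by simp
      moreover have "g' \<le> g" using g(4)[OF g'(2)] g'(3) memij by simp
      ultimately have "g = g'" by simp
      then show ?thesis using g g' by (simp add: F_def inv)
    qed
  qed
  have ch: "cnm_children T' p = F ` cnm_children T (F p)" for p
  proof (rule set_eqI)
    fix q :: "nat \<times> nat"
    obtain x j where q: "q = (x,j)" by (cases q)
    have "q \<in> F ` cnm_children T (F p) \<longleftrightarrow> (f x, j) \<in> cnm_children T (F p)"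
      using imgF q by (simp add: F_def)
    also have "\<dots> \<longleftrightarrow> (f x, j) \<in> T \<and> (f x, j) \<noteq> (1,1) \<and> cnm_parent T (f x, j) = F p"
      by (simp add: cnm_children_def)
    also have "\<dots> \<longleftrightarrow> (x,j) \<in> T' \<and> (x,j) \<noteq> (1,1) \<and> cnm_parent T' (x,j) = p"
    proof
      assume h: "(f x, j) \<in> T \<and> (f x, j) \<noteq> (1,1) \<and> cnm_parent T (f x, j) = F p"
      then have a: "(x,j) \<in> T'" "(x,j) \<noteq> (1,1)" using memij f1iff by auto
      then show "(x,j) \<in> T' \<and> (x,j) \<noteq> (1,1) \<and> cnm_parent T' (x,j) = p" using par[OF a] h FF by simp
    next
      assume h: "(x,j) \<in> T' \<and> (x,j) \<noteq> (1,1) \<and> cnm_parent T' (x,j) = p"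
      then have "F (cnm_parent T (f x, j)) = p" using par[of x j] by simp
      then have "cnm_parent T (f x, j) = F p" using FF by metis
      then show "(f x, j) \<in> T \<and> (f x, j) \<noteq> (1,1) \<and> cnm_parent T (f x, j) = F p" using h memij f1iff by auto
    qed
    also have "\<dots> \<longleftrightarrow> q \<in> cnm_children T' p" by (simp add: cnm_children_def q)
    finally show "q \<in> cnm_children T' p \<longleftrightarrow> q \<in> F ` cnm_children T (F p)" by simp
  qed
  have "CNM n T'"
    unfolding CNM_def
  proof (intro conjI ballI impI)
    show "T' \<subseteq> {1..n} \<times> {1..n}"
    proof
      fix p assume "p \<in> T'"
      moreover obtain x j where p: "p = (x,j)" by (cases p)
      ultimately have "(f x, j) \<in> T" using memij by simp
      then have "f x \<in> {1..n}" "j \<in> {1..n}" using CNM_bounds[OF T] by auto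
      then show "p \<in> {1..n} \<times> {1..n}" using fr[of "f x"] inv p by simp
    qed
    show "(1,1) \<in> T'" using memij f1 CNM_root[OF T] by simp
    show "has_above T' p \<noteq> has_left T' p" if "p \<in> T'" "p \<noteq> (1,1)" for p
    proof -
      obtain x j where p: "p = (x,j)" by (cases p)
      have "(f x, j) \<in> T" "(f x, j) \<noteq> (1,1)" using that p memij f1iff by auto
      then show ?thesis using CNM_excl[OF T] ha hl that p by auto
    qed
    show "\<exists>j. (i,j) \<in> T'" if ii: "i \<in> {1..n}" for i
    proof -
      obtain j where "(f i, j) \<in> T" using T fr[OF ii] unfolding CNM_def by blast
      then show ?thesis using memij by blast
    qed
    show "\<exists>i. (i,j) \<in> T'" if jj: "j \<in> {1..n}" for j
    proof -
      obtain i where "(i, j) \<in> T" using T jj unfolding CNM_def by blast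
      then have "(f i, j) \<in> T'" using memij inv by simp
      then show ?thesis by blast
    qed
    show "card (cnm_children T' p) = 0 \<or> card (cnm_children T' p) = 2" if "p \<in> T'" for p
    proof -
      have "F p \<in> T" using that imgF unfolding T'_def by simp
      moreover have "card (cnm_children T' p) = card (cnm_children T (F p))"
        using ch card_image injF by (metis inj_on_subset subset_UNIV)
      ultimately show ?thesis using CNM_card[OF T] by simp
    qed
  qed
  then show ?thesis unfolding T'_def F_def .
qed

lemma adj_transpose_mono:
  fixes a i i' :: nat
  assumes "\<not> (i = a \<and> i' = a+1)" "\<not> (i = a+1 \<and> i' = a)"
  shows "i < i' \<longleftrightarrow> transpose a (a+1) i < transpose a (a+1) i'"
  using assms by (auto simp: transpose_def)

lemma swap_rows_CNM:
  assumes T: "CNM n T" and a: "1 \<le> a" "a+1 \<le> n" and ns: "\<forall>c. \<not> ((a,c) \<in> T \<and> (a+1,c) \<in> T)"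
  shows "CNM n (swap_rows a (a+1) T)"
proof -
  have "a \<noteq> 1"
  proof
    assume a1: "a = 1"
    then have "2 \<le> n" using a by simp
    then obtain c where "(1,c) \<in> T" "(2,c) \<in> T" using rows_share_12[OF T] by blast
    moreover have "(2::nat) = 1 + 1" by simp
    ultimately show False using ns a1 by metis
  qed
  then have a2: "2 \<le> a" using a by simp
  show ?thesis unfolding swap_rows_def
  proof (rule CNM_rowmap[OF T])
    show "\<And>x. transpose a (a+1) (transpose a (a+1) x) = x" by simp
    show "transpose a (a+1) 1 = 1" using a2 by simp
    show "\<And>x. x \<in> {1..n} \<Longrightarrow> transpose a (a+1) x \<in> {1..n}" using a by (auto simp: transpose_def)
    show "(i < i' \<longleftrightarrow> transpose a (a+1) i < transpose a (a+1) i')" if "(i,j) \<in> T" "(i',j) \<in> T" for i i' j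
    proof -
      have h1: "\<not> (i = a \<and> i' = a+1)" using that ns by blast
      have h2: "\<not> (i = a+1 \<and> i' = a)" using that ns by blast
      show ?thesis by (rule adj_transpose_mono[OF h1 h2])
    qed
  qed
qed

definition flip :: "(nat \<times> nat) set \<Rightarrow> (nat \<times> nat) set" where
  "flip T = (\<lambda>(i,j). (j,i)) ` T"

lemma mem_flip[simp]: "(x,y) \<in> flip T \<longleftrightarrow> (y,x) \<in> T"
  by (auto simp: flip_def)

lemma flip_flip[simp]: "flip (flip T) = T"
proof (rule set_eqI)
  fix p :: "nat \<times> nat" show "p \<in> flip (flip T) \<longleftrightarrow> p \<in> T" by (cases p) simp
qed

lemma has_above_flip: "has_above (flip T) (y,x) = has_left T (x,y)"
  by (simp add: has_above_def has_left_def)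
lemma has_left_flip: "has_left (flip T) (y,x) = has_above T (x,y)"
  by (simp add: has_above_def has_left_def)

lemma CNM_flip:
  assumes T: "CNM n T" shows "CNM n (flip T)"
proof -
  have par: "cnm_parent (flip T) (y,x) = prod.swap (cnm_parent T (x,y))" if xy: "(x,y) \<in> T" "(x,y) \<noteq> (1,1)" for x y
  proof (cases "has_above T (x,y)")
    case True
    then have nl: "\<not> has_left T (x,y)" using CNM_excl[OF T xy] by simp
    have na': "\<not> has_above (flip T) (y,x)" using nl has_above_flip by simp
    have hl': "has_left (flip T) (y,x)" using True has_left_flip by simp
    obtain g where g: "cnm_parent T (x,y) = (g,y)" "g < x" "(g,y) \<in> T" "\<And>i'. i' < x \<Longrightarrow> (i',y) \<in> T \<Longrightarrow> i' \<le> g"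
      using parent_above[OF True] by blast
    obtain g' where g': "cnm_parent (flip T) (y,x) = (y,g')" "g' < x" "(y,g') \<in> flip T" "\<And>j'. j' < x \<Longrightarrow> (y,j') \<in> flip T \<Longrightarrow> j' \<le> g'"
      using parent_left[OF na' hl'] by blast
    have "g \<le> g'" using g'(4)[OF g(2)] g(3) by simp
    moreover have "g' \<le> g" using g(4)[OF g'(2)] g'(3) by simp
    ultimately have "g = g'" by (rule antisym)
    then show ?thesis using g g' by simp
  next
    case False
    then have hlT: "has_left T (x,y)" using CNM_excl[OF T xy] by simp
    have ha': "has_above (flip T) (y,x)" using hlT has_above_flip by simp
    obtain g where g: "cnm_parent T (x,y) = (x,g)" "g < y" "(x,g) \<in> T" "\<And>j'. j' < y \<Longrightarrow> (x,j') \<in> T \<Longrightarrow> j' \<le> g"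
      using parent_left[OF False hlT] by blast
    obtain g' where g': "cnm_parent (flip T) (y,x) = (g',x)" "g' < y" "(g',x) \<in> flip T" "\<And>i'. i' < y \<Longrightarrow> (i',x) \<in> flip T \<Longrightarrow> i' \<le> g'"
      using parent_above[OF ha'] by blast
    have "g \<le> g'" using g'(4)[OF g(2)] g(3) by simp
    moreover have "g' \<le> g" using g(4)[OF g'(2)] g'(3) by simp
    ultimately have "g = g'" by (rule antisym)
    then show ?thesis using g g' by simp
  qed
  have ch: "cnm_children (flip T) p = prod.swap ` cnm_children T (prod.swap p)" for p
  proof (rule set_eqI)
    fix q :: "nat \<times> nat"
    obtain y x where q: "q = (y,x)" by (cases q)
    have "q \<in> prod.swap ` cnm_children T (prod.swap p) \<longleftrightarrow> (x,y) \<in> cnm_children T (prod.swap p)"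
    proof
      assume "q \<in> prod.swap ` cnm_children T (prod.swap p)"
      then show "(x,y) \<in> cnm_children T (prod.swap p)" using q by auto
    next
      assume "(x,y) \<in> cnm_children T (prod.swap p)"
      then have "prod.swap (x,y) \<in> prod.swap ` cnm_children T (prod.swap p)" by (rule imageI)
      then show "q \<in> prod.swap ` cnm_children T (prod.swap p)" using q by simp
    qed
    also have "\<dots> \<longleftrightarrow> (x,y) \<in> T \<and> (x,y) \<noteq> (1,1) \<and> cnm_parent T (x,y) = prod.swap p"
      by (simp add: cnm_children_def)
    also have "\<dots> \<longleftrightarrow> (y,x) \<in> flip T \<and> (y,x) \<noteq> (1,1) \<and> cnm_parent (flip T) (y,x) = p"
    proof
      assume h: "(x,y) \<in> T \<and> (x,y) \<noteq> (1,1) \<and> cnm_parent T (x,y) = prod.swap p"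
      then show "(y,x) \<in> flip T \<and> (y,x) \<noteq> (1,1) \<and> cnm_parent (flip T) (y,x) = p" using par[of x y] by auto
    next
      assume h: "(y,x) \<in> flip T \<and> (y,x) \<noteq> (1,1) \<and> cnm_parent (flip T) (y,x) = p"
      then have "(x,y) \<in> T" "(x,y) \<noteq> (1,1)" by auto
      then show "(x,y) \<in> T \<and> (x,y) \<noteq> (1,1) \<and> cnm_parent T (x,y) = prod.swap p" using par[of x y] h by auto
    qed
    also have "\<dots> \<longleftrightarrow> q \<in> cnm_children (flip T) p" by (simp add: cnm_children_def q)
    finally show "q \<in> cnm_children (flip T) p \<longleftrightarrow> q \<in> prod.swap ` cnm_children T (prod.swap p)" by simp
  qed
  show ?thesis
    unfolding CNM_def
  proof (intro conjI ballI impI)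
    show "flip T \<subseteq> {1..n} \<times> {1..n}" using CNM_bounds[OF T] by (auto simp: flip_def)
    show "(1,1) \<in> flip T" using CNM_root[OF T] by simp
    show "has_above (flip T) p \<noteq> has_left (flip T) p" if "p \<in> flip T" "p \<noteq> (1,1)" for p
    proof -
      obtain y x where p: "p = (y,x)" by (cases p)
      have "(x,y) \<in> T" "(x,y) \<noteq> (1,1)" using that p by auto
      then show ?thesis using CNM_excl[OF T] has_above_flip has_left_flip p by metis
    qed
    show "\<exists>j. (i,j) \<in> flip T" if "i \<in> {1..n}" for i using T that unfolding CNM_def by auto
    show "\<exists>i. (i,j) \<in> flip T" if "j \<in> {1..n}" for j using T that unfolding CNM_def by auto
    show "card (cnm_children (flip T) p) = 0 \<or> card (cnm_children (flip T) p) = 2" if "p \<in> flip T" for p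
    proof -
      have "prod.swap p \<in> T" using that by (auto simp: flip_def)
      moreover have "card (cnm_children (flip T) p) = card (cnm_children T (prod.swap p))"
        using ch card_image by (metis inj_swap inj_on_subset subset_UNIV)
      ultimately show ?thesis using CNM_card[OF T] by simp
    qed
  qed
qed

lemma mem_swap_rows[simp]: "(x,y) \<in> swap_rows a b T \<longleftrightarrow> (transpose a b x, y) \<in> T"
proof
  assume "(x,y) \<in> swap_rows a b T"
  then obtain i j where "(i,j) \<in> T" "(x,y) = (transpose a b i, j)" unfolding swap_rows_def by auto
  then show "(transpose a b x, y) \<in> T" by auto
next
  assume h: "(transpose a b x, y) \<in> T"
  have "(x,y) = (\<lambda>(i,j). (transpose a b i, j)) (transpose a b x, y)" by simp
  then show "(x,y) \<in> swap_rows a b T" unfolding swap_rows_def using h by (rule image_eqI)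
qed

lemma mem_swap_cols[simp]: "(x,y) \<in> swap_cols a b T \<longleftrightarrow> (x, transpose a b y) \<in> T"
proof
  assume "(x,y) \<in> swap_cols a b T"
  then obtain i j where "(i,j) \<in> T" "(x,y) = (i, transpose a b j)" unfolding swap_cols_def by auto
  then show "(x, transpose a b y) \<in> T" by auto
next
  assume h: "(x, transpose a b y) \<in> T"
  have "(x,y) = (\<lambda>(i,j). (i, transpose a b j)) (x, transpose a b y)" by simp
  then show "(x,y) \<in> swap_cols a b T" unfolding swap_cols_def using h by (rule image_eqI)
qed

lemma swap_cols_flip: "swap_cols a b T = flip (swap_rows a b (flip T))"
proof (rule set_eqI)
  fix p :: "nat \<times> nat" show "p \<in> swap_cols a b T \<longleftrightarrow> p \<in> flip (swap_rows a b (flip T))" by (cases p) simp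
qed

lemma swap_cols_CNM:
  assumes T: "CNM n T" and a: "1 \<le> a" "a+1 \<le> n" and ns: "\<forall>r. \<not> ((r,a) \<in> T \<and> (r,a+1) \<in> T)"
  shows "CNM n (swap_cols a (a+1) T)"
proof -
  have "CNM n (swap_rows a (a+1) (flip T))"
    using swap_rows_CNM[OF CNM_flip[OF T] a] ns by simp
  then show ?thesis using CNM_flip swap_cols_flip by metis
qed



definition Inv :: "nat \<Rightarrow> (nat\<times>nat) set \<Rightarrow> (nat \<Rightarrow> 'k::linorder) \<Rightarrow> (nat \<Rightarrow> 'k) \<Rightarrow> bool" where
 "Inv n T kR kC \<longleftrightarrow> CNM n T \<and> inj_on kR {1..n} \<and> inj_on kC {1..n}
   \<and> (\<forall>r s c. r < s \<longrightarrow> (r,c) \<in> T \<longrightarrow> (s,c) \<in> T \<longrightarrow> kR s < kR r)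
   \<and> (\<forall>r c d. c < d \<longrightarrow> (r,c) \<in> T \<longrightarrow> (r,d) \<in> T \<longrightarrow> kC c < kC d)
   \<and> (\<forall>r c. (r,c) \<in> T \<longrightarrow> (\<forall>c'. (r,c') \<in> T \<longrightarrow> c' \<le> c) \<longrightarrow> kR r = kC c)"

definition invcount :: "nat \<Rightarrow> ('k \<Rightarrow> 'k \<Rightarrow> bool) \<Rightarrow> (nat \<Rightarrow> 'k) \<Rightarrow> nat" where
  "invcount n P k = card {(r,s). r \<in> {1..n} \<and> s \<in> {1..n} \<and> r < s \<and> P (k r) (k s)}"

lemma invcount_decrease:
  assumes "1 \<le> a" "a+1 \<le> n" "P (k a) (k (a+1))" "\<not> P (k (a+1)) (k a)"
  shows "invcount n P (k \<circ> transpose a (a+1)) < invcount n P k"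
proof -
  let ?t = "transpose a (a+1)"
  define W where "W = {(r,s). r \<in> {1..n} \<and> s \<in> {1..n} \<and> r < s \<and> P (k r) (k s)}"
  define W' where "W' = {(r,s). r \<in> {1..n} \<and> s \<in> {1..n} \<and> r < s \<and> P ((k \<circ> ?t) r) ((k \<circ> ?t) s)}"
  define G where "G = (\<lambda>(r,s). (?t r, ?t s))"
  have finW: "finite W" unfolding W_def
    by (rule finite_subset[of _ "{1..n} \<times> {1..n}"]) auto
  have aW: "(a, a+1) \<in> W" using assms unfolding W_def by auto
  have GG: "\<And>p. G (G p) = p" by (auto simp: G_def split: prod.splits)
  have injG: "inj_on G W'" by (metis GG inj_onI)
  have tn: "\<And>x. x \<in> {1..n} \<Longrightarrow> ?t x \<in> {1..n}" using assms(1,2) by (auto simp: transpose_def)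
  have sub: "G ` W' \<subseteq> W - {(a, a+1)}"
  proof
    fix q assume "q \<in> G ` W'"
    then obtain r s where rs: "(r,s) \<in> W'" "q = (?t r, ?t s)" by (auto simp: G_def)
    have r: "r \<in> {1..n}" "s \<in> {1..n}" "r < s" "P (k (?t r)) (k (?t s))" using rs(1) unfolding W'_def by auto
    have n1: "\<not> (r = a \<and> s = a+1)" using r(4) assms(4) by auto
    have n2: "\<not> (r = a+1 \<and> s = a)" using r(3) by auto
    have "?t r < ?t s" using adj_transpose_mono[OF n1 n2] r(3) by simp
    moreover have "(?t r, ?t s) \<noteq> (a, a+1)"
    proof
      assume "(?t r, ?t s) = (a, a+1)"
      then have e: "?t r = a" "?t s = a+1" by auto
      then have "?t (?t r) = ?t a" "?t (?t s) = ?t (a+1)" by simp_all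
      then have "r = a+1" "s = a" by simp_all
      then show False using r(3) by simp
    qed
    ultimately show "q \<in> W - {(a, a+1)}" using rs(2) r tn unfolding W_def by auto
  qed
  have "card W' = card (G ` W')" using card_image[OF injG] by simp
  also have "\<dots> \<le> card (W - {(a, a+1)})" using card_mono[OF _ sub] finW by simp
  also have "\<dots> < card W" by (rule card_Diff1_less[OF finW aW])
  finally show ?thesis unfolding invcount_def W_def W'_def .
qed

lemma prepend:
  assumes "CNM n T" "row_or_col_swap n T T'" "Ms 0 = T'" "\<forall>i\<le>N. CNM n (Ms i)"
    "\<forall>i<N. row_or_col_swap n (Ms i) (Ms (Suc i))" "upper_diagonal_CNM n (Ms N)"
  shows "\<exists>N::nat. \<exists>Ms :: nat \<Rightarrow> (nat \<times> nat) set.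
           Ms 0 = T
         \<and> (\<forall>i\<le>N. CNM n (Ms i))
         \<and> (\<forall>i<N. row_or_col_swap n (Ms i) (Ms (Suc i)))
         \<and> upper_diagonal_CNM n (Ms N)"
proof -
  let ?M = "\<lambda>i. if i = 0 then T else Ms (i - 1)"
  have 1: "?M 0 = T" by simp
  have 2: "\<forall>i\<le>Suc N. CNM n (?M i)"
  proof (intro allI impI)
    fix i assume i: "i \<le> Suc N" show "CNM n (?M i)"
    proof (cases i)
      case 0 then show ?thesis using assms(1) by simp
    next
      case (Suc j)
      then have "j \<le> N" using i by simp
      then show ?thesis using assms(4) Suc by simp
    qed
  qed
  have 3: "\<forall>i<Suc N. row_or_col_swap n (?M i) (?M (Suc i))"
  proof (intro allI impI)
    fix i assume i: "i < Suc N" show "row_or_col_swap n (?M i) (?M (Suc i))"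
    proof (cases i)
      case 0 then show ?thesis using assms(2,3) by simp
    next
      case (Suc j)
      then have "j < N" using i by simp
      then have "row_or_col_swap n (Ms j) (Ms (Suc j))" using assms(5) by blast
      then show ?thesis using Suc by simp
    qed
  qed
  have 4: "upper_diagonal_CNM n (?M (Suc N))" using assms(6) by simp
  have "?M 0 = T \<and> (\<forall>i\<le>Suc N. CNM n (?M i)) \<and> (\<forall>i<Suc N. row_or_col_swap n (?M i) (?M (Suc i)))
         \<and> upper_diagonal_CNM n (?M (Suc N))" using 1 2 3 4 by (intro conjI)
  then show ?thesis by (intro exI)
qed

lemma step_rows:
  fixes kR kC :: "nat \<Rightarrow> 'k::linorder"
  assumes I: "Inv n T kR kC" and a: "1 \<le> a" "a+1 \<le> n" and lt: "kR a < kR (a+1)"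
  shows "Inv n (swap_rows a (a+1) T) (kR \<circ> transpose a (a+1)) kC"
    "row_or_col_swap n T (swap_rows a (a+1) T)"
proof -
  let ?t = "transpose a (a+1)"
  let ?T = "swap_rows a (a+1) T"
  have T: "CNM n T" and ij: "inj_on kR {1..n}" "inj_on kC {1..n}"
    and ro: "\<forall>r s c. r < s \<longrightarrow> (r,c) \<in> T \<longrightarrow> (s,c) \<in> T \<longrightarrow> kR s < kR r"
    and co: "\<forall>r c d. c < d \<longrightarrow> (r,c) \<in> T \<longrightarrow> (r,d) \<in> T \<longrightarrow> kC c < kC d"
    and li: "\<forall>r c. (r,c) \<in> T \<longrightarrow> (\<forall>c'. (r,c') \<in> T \<longrightarrow> c' \<le> c) \<longrightarrow> kR r = kC c"
    using I unfolding Inv_def by auto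
  have ns: "\<forall>c. \<not> ((a,c) \<in> T \<and> (a+1,c) \<in> T)"
  proof (intro allI notI)
    fix c assume h: "(a,c) \<in> T \<and> (a+1,c) \<in> T"
    have "a < a+1" by simp
    then have "kR (a+1) < kR a" using ro h by blast
    then show False using lt by simp
  qed
  have timg: "?t ` {1..n} = {1..n}" using a by (intro transpose_image_eq) auto
  have c1: "CNM n ?T" using swap_rows_CNM[OF T a ns] .
  have c2: "inj_on (kR \<circ> ?t) {1..n}"
    using comp_inj_on[of ?t "{1..n}" kR] ij(1) timg by simp
  have c3: "\<forall>r s c. r < s \<longrightarrow> (r,c) \<in> ?T \<longrightarrow> (s,c) \<in> ?T \<longrightarrow> (kR \<circ> ?t) s < (kR \<circ> ?t) r"
  proof (intro allI impI)
    fix r s c assume h: "r < s" "(r,c) \<in> ?T" "(s,c) \<in> ?T"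
    then have m: "(?t r, c) \<in> T" "(?t s, c) \<in> T" by auto
    have n1: "\<not> (r = a \<and> s = a+1)" using m ns by auto
    have n2: "\<not> (r = a+1 \<and> s = a)" using h(1) by auto
    have "?t r < ?t s" using adj_transpose_mono[OF n1 n2] h(1) by simp
    then show "(kR \<circ> ?t) s < (kR \<circ> ?t) r" using ro m by simp
  qed
  have c4: "\<forall>r c d. c < d \<longrightarrow> (r,c) \<in> ?T \<longrightarrow> (r,d) \<in> ?T \<longrightarrow> kC c < kC d"
  proof (intro allI impI)
    fix r c d assume h: "c < d" "(r,c) \<in> ?T" "(r,d) \<in> ?T"
    then have m: "(?t r, c) \<in> T" "(?t r, d) \<in> T" by auto
    then show "kC c < kC d" using co h(1) by blast
  qed
  have c5: "\<forall>r c. (r,c) \<in> ?T \<longrightarrow> (\<forall>c'. (r,c') \<in> ?T \<longrightarrow> c' \<le> c) \<longrightarrow> (kR \<circ> ?t) r = kC c"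
  proof (intro allI impI)
    fix r c assume h: "(r,c) \<in> ?T" "\<forall>c'. (r,c') \<in> ?T \<longrightarrow> c' \<le> c"
    have m: "(?t r, c) \<in> T" using h(1) by simp
    have "\<forall>c'. (?t r, c') \<in> T \<longrightarrow> c' \<le> c" using h(2) by simp
    then have "kR (?t r) = kC c" using li m by blast
    then show "(kR \<circ> ?t) r = kC c" by simp
  qed
  show "Inv n ?T (kR \<circ> ?t) kC" unfolding Inv_def using c1 c2 ij(2) c3 c4 c5 by (simp only:)
  have aa: "a \<in> {1..n}" "a+1 \<in> {1..n}" "a \<noteq> a+1" using a by auto
  then show "row_or_col_swap n T ?T" unfolding row_or_col_swap_def by blast
qed

lemma step_cols:
  fixes kR kC :: "nat \<Rightarrow> 'k::linorder"
  assumes I: "Inv n T kR kC" and a: "1 \<le> a" "a+1 \<le> n" and lt: "kC (a+1) < kC a"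
  shows "Inv n (swap_cols a (a+1) T) kR (kC \<circ> transpose a (a+1))"
    "row_or_col_swap n T (swap_cols a (a+1) T)"
proof -
  let ?t = "transpose a (a+1)"
  let ?T = "swap_cols a (a+1) T"
  have T: "CNM n T" and ij: "inj_on kR {1..n}" "inj_on kC {1..n}"
    and ro: "\<forall>r s c. r < s \<longrightarrow> (r,c) \<in> T \<longrightarrow> (s,c) \<in> T \<longrightarrow> kR s < kR r"
    and co: "\<forall>r c d. c < d \<longrightarrow> (r,c) \<in> T \<longrightarrow> (r,d) \<in> T \<longrightarrow> kC c < kC d"
    and li: "\<forall>r c. (r,c) \<in> T \<longrightarrow> (\<forall>c'. (r,c') \<in> T \<longrightarrow> c' \<le> c) \<longrightarrow> kR r = kC c"
    using I unfolding Inv_def by auto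
  have ns: "\<forall>r. \<not> ((r,a) \<in> T \<and> (r,a+1) \<in> T)"
  proof (intro allI notI)
    fix r assume h: "(r,a) \<in> T \<and> (r,a+1) \<in> T"
    have "a < a+1" by simp
    then have "kC a < kC (a+1)" using co h by blast
    then show False using lt by simp
  qed
  have timg: "?t ` {1..n} = {1..n}" using a by (intro transpose_image_eq) auto
  have mono: "?t c < ?t d" if "c < d" "(r,?t c) \<in> T" "(r,?t d) \<in> T" for r c d
  proof -
    have n1: "\<not> (c = a \<and> d = a+1)" using that ns by auto
    have n2: "\<not> (c = a+1 \<and> d = a)" using that(1) by auto
    show ?thesis using adj_transpose_mono[OF n1 n2] that(1) by simp
  qed
  have c1: "CNM n ?T" using swap_cols_CNM[OF T a ns] .
  have c2: "inj_on (kC \<circ> ?t) {1..n}"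
    using comp_inj_on[of ?t "{1..n}" kC] ij(2) timg by simp
  have c3: "\<forall>r s c. r < s \<longrightarrow> (r,c) \<in> ?T \<longrightarrow> (s,c) \<in> ?T \<longrightarrow> kR s < kR r"
  proof (intro allI impI)
    fix r s c assume h: "r < s" "(r,c) \<in> ?T" "(s,c) \<in> ?T"
    then have m: "(r, ?t c) \<in> T" "(s, ?t c) \<in> T" by auto
    then show "kR s < kR r" using ro h(1) by blast
  qed
  have c4: "\<forall>r c d. c < d \<longrightarrow> (r,c) \<in> ?T \<longrightarrow> (r,d) \<in> ?T \<longrightarrow> (kC \<circ> ?t) c < (kC \<circ> ?t) d"
  proof (intro allI impI)
    fix r c d assume h: "c < d" "(r,c) \<in> ?T" "(r,d) \<in> ?T"
    then have m: "(r, ?t c) \<in> T" "(r, ?t d) \<in> T" by auto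
    have "?t c < ?t d" using mono[OF h(1) m] .
    then show "(kC \<circ> ?t) c < (kC \<circ> ?t) d" using co m by simp
  qed
  have c5: "\<forall>r c. (r,c) \<in> ?T \<longrightarrow> (\<forall>c'. (r,c') \<in> ?T \<longrightarrow> c' \<le> c) \<longrightarrow> kR r = (kC \<circ> ?t) c"
  proof (intro allI impI)
    fix r c assume h: "(r,c) \<in> ?T" "\<forall>c'. (r,c') \<in> ?T \<longrightarrow> c' \<le> c"
    have m: "(r, ?t c) \<in> T" using h(1) by simp
    have "\<forall>c''. (r,c'') \<in> T \<longrightarrow> c'' \<le> ?t c"
    proof (intro allI impI)
      fix c'' assume c'': "(r,c'') \<in> T"
      then have "(r, ?t c'') \<in> ?T" by simp
      then have le: "?t c'' \<le> c" using h(2) by blast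
      show "c'' \<le> ?t c"
      proof (rule ccontr)
        assume "\<not> c'' \<le> ?t c"
        then have lt2: "?t c < c''" by simp
        have n1: "\<not> (?t c = a \<and> c'' = a+1)" using m c'' ns by auto
        have n2: "\<not> (?t c = a+1 \<and> c'' = a)" using lt2 by auto
        have "?t (?t c) < ?t c''" using adj_transpose_mono[OF n1 n2] lt2 by simp
        then show False using le by simp
      qed
    qed
    then have "kR r = kC (?t c)" using li m by blast
    then show "kR r = (kC \<circ> ?t) c" by simp
  qed
  show "Inv n ?T kR (kC \<circ> ?t)" unfolding Inv_def using c1 ij(1) c2 c3 c4 c5 by (simp only:)
  have aa: "a \<in> {1..n}" "a+1 \<in> {1..n}" "a \<noteq> a+1" using a by auto
  then show "row_or_col_swap n T ?T" unfolding row_or_col_swap_def by blast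
qed

lemma chain_dec:
  fixes k :: "nat \<Rightarrow> 'k::linorder"
  assumes "\<forall>a. 1 \<le> a \<longrightarrow> a+1 \<le> n \<longrightarrow> k (a+1) < k a"
  shows "1 \<le> r \<Longrightarrow> r < s \<Longrightarrow> s \<le> n \<Longrightarrow> k s < k r"
proof (induction s)
  case 0 then show ?case by simp
next
  case (Suc s)
  show ?case
  proof (cases "r = s")
    case True then show ?thesis using assms Suc.prems by simp
  next
    case False
    then have "k s < k r" using Suc by simp
    moreover have "k (Suc s) < k s" using assms Suc.prems by simp
    ultimately show ?thesis by simp
  qed
qed

lemma chain_inc:
  fixes k :: "nat \<Rightarrow> 'k::linorder"
  assumes "\<forall>a. 1 \<le> a \<longrightarrow> a+1 \<le> n \<longrightarrow> k a < k (a+1)"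
  shows "1 \<le> r \<Longrightarrow> r < s \<Longrightarrow> s \<le> n \<Longrightarrow> k r < k s"
proof (induction s)
  case 0 then show ?case by simp
next
  case (Suc s)
  show ?case
  proof (cases "r = s")
    case True then show ?thesis using assms Suc.prems by simp
  next
    case False
    then have "k r < k s" using Suc by simp
    moreover have "k s < k (Suc s)" using assms Suc.prems by simp
    ultimately show ?thesis by simp
  qed
qed

lemma dec_perm:
  fixes \<sigma> :: "nat \<Rightarrow> nat"
  assumes rng: "\<forall>r\<in>{1..n}. \<sigma> r \<in> {1..n}" and dec: "\<forall>r s. 1 \<le> r \<longrightarrow> r < s \<longrightarrow> s \<le> n \<longrightarrow> \<sigma> s < \<sigma> r"
  shows "r \<in> {1..n} \<Longrightarrow> \<sigma> r = n + 1 - r"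
proof -
  have low: "\<forall>r. 1 \<le> r \<longrightarrow> r \<le> n \<longrightarrow> n - r = k \<longrightarrow> n + 1 \<le> \<sigma> r + r" for k
  proof (induction k)
    case 0 then show ?case using rng by fastforce
  next
    case (Suc k)
    show ?case
    proof (intro allI impI)
      fix r assume h: "1 \<le> r" "r \<le> n" "n - r = Suc k"
      have "1 \<le> r+1" "r+1 \<le> n" "n - (r+1) = k" using h by auto
      then have "n + 1 \<le> \<sigma> (r+1) + (r+1)" using Suc.IH by blast
      moreover have "\<sigma> (r+1) < \<sigma> r" using dec h by simp
      ultimately show "n + 1 \<le> \<sigma> r + r" by simp
    qed
  qed
  have high: "\<forall>r. 1 \<le> r \<longrightarrow> r \<le> n \<longrightarrow> \<sigma> r + r \<le> n + 1" 
  proof (intro allI)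
    fix r show "1 \<le> r \<longrightarrow> r \<le> n \<longrightarrow> \<sigma> r + r \<le> n + 1"
    proof (induction r)
      case 0 then show ?case by simp
    next
      case (Suc r)
      show ?case
      proof (intro impI)
        assume h: "1 \<le> Suc r" "Suc r \<le> n"
        show "\<sigma> (Suc r) + Suc r \<le> n + 1"
        proof (cases "r = 0")
          case True then show ?thesis using rng h by auto
        next
          case False
          then have "\<sigma> r + r \<le> n + 1" using Suc.IH h by simp
          moreover have "\<sigma> (Suc r) < \<sigma> r" using dec h False by simp
          ultimately show ?thesis by simp
        qed
      qed
    qed
  qed
  assume "r \<in> {1..n}"
  then show "\<sigma> r = n + 1 - r" using low[of "n - r"] high by force
qed

lemma final:
  fixes kR kC :: "nat \<Rightarrow> 'k::linorder"
  assumes I: "Inv n T kR kC"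
    and nr: "\<forall>a. 1 \<le> a \<longrightarrow> a+1 \<le> n \<longrightarrow> \<not> kR a < kR (a+1)"
    and nc: "\<forall>a. 1 \<le> a \<longrightarrow> a+1 \<le> n \<longrightarrow> \<not> kC (a+1) < kC a"
  shows "upper_diagonal_CNM n T"
proof -
  have T: "CNM n T" and ij: "inj_on kR {1..n}" "inj_on kC {1..n}"
    and li: "\<forall>r c. (r,c) \<in> T \<longrightarrow> (\<forall>c'. (r,c') \<in> T \<longrightarrow> c' \<le> c) \<longrightarrow> kR r = kC c"
    using I unfolding Inv_def by auto
  have dR: "\<forall>a. 1 \<le> a \<longrightarrow> a+1 \<le> n \<longrightarrow> kR (a+1) < kR a"
  proof (intro allI impI)
    fix a assume h: "1 \<le> a" "a+1 \<le> n"
    have ne: "kR (a+1) \<noteq> kR a" using inj_onD[OF ij(1)] h by fastforce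
    have "\<not> kR a < kR (a+1)" using nr h by blast
    then have "kR (a+1) \<le> kR a" by (simp add: not_less)
    then show "kR (a+1) < kR a" using ne by (rule order_le_neq_trans)
  qed
  have iC: "\<forall>a. 1 \<le> a \<longrightarrow> a+1 \<le> n \<longrightarrow> kC a < kC (a+1)"
  proof (intro allI impI)
    fix a assume h: "1 \<le> a" "a+1 \<le> n"
    have ne: "kC a \<noteq> kC (a+1)" using inj_onD[OF ij(2)] h by fastforce
    have "\<not> kC (a+1) < kC a" using nc h by blast
    then have "kC a \<le> kC (a+1)" by (simp add: not_less)
    then show "kC a < kC (a+1)" using ne by (rule order_le_neq_trans)
  qed
  define \<sigma> where "\<sigma> r = rmax T r" for r
  have rowT: "(r, \<sigma> r) \<in> T" "\<forall>c'. (r,c') \<in> T \<longrightarrow> c' \<le> \<sigma> r" if rr: "r \<in> {1..n}" for r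
  proof -
    obtain j where "(r,j) \<in> T" using T rr unfolding CNM_def by blast
    then show "(r, \<sigma> r) \<in> T" "\<forall>c'. (r,c') \<in> T \<longrightarrow> c' \<le> \<sigma> r"
      using rmax_props[OF T] unfolding \<sigma>_def by auto
  qed
  have rng: "\<forall>r\<in>{1..n}. \<sigma> r \<in> {1..n}" using rowT CNM_bounds[OF T] by fastforce
  have keq: "kR r = kC (\<sigma> r)" if "r \<in> {1..n}" for r using li rowT[OF that] by blast
  have dec: "\<forall>r s. 1 \<le> r \<longrightarrow> r < s \<longrightarrow> s \<le> n \<longrightarrow> \<sigma> s < \<sigma> r"
  proof (intro allI impI)
    fix r s assume h: "1 \<le> r" "r < s" "s \<le> n"
    have rs: "r \<in> {1..n}" "s \<in> {1..n}" using h by auto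
    have kk: "kR s < kR r" using chain_dec[OF dR h] .
    show "\<sigma> s < \<sigma> r"
    proof (rule ccontr)
      assume "\<not> \<sigma> s < \<sigma> r"
      then have "\<sigma> r \<le> \<sigma> s" by simp
      then consider "\<sigma> r = \<sigma> s" | "\<sigma> r < \<sigma> s" by linarith
      then show False
      proof cases
        case 1
        then have "kR r = kR s" using keq rs by simp
        then show False using kk by simp
      next
        case 2
        have "\<sigma> r \<in> {1..n}" "\<sigma> s \<in> {1..n}" using rng rs by auto
        then have "kC (\<sigma> r) < kC (\<sigma> s)" using chain_inc[OF iC _ 2] by simp
        then show False using keq rs kk by simp
      qed
    qed
  qed
  have sig: "\<sigma> r = n + 1 - r" if "r \<in> {1..n}" for r using dec_perm[OF rng dec that] .
  have "cnm_leaves T = {(i, n + 1 - i) | i. i \<in> {1..n}}"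
  proof (rule set_eqI)
    fix p :: "nat \<times> nat"
    obtain r c where p: "p = (r,c)" by (cases p)
    show "p \<in> cnm_leaves T \<longleftrightarrow> p \<in> {(i, n + 1 - i) | i. i \<in> {1..n}}"
    proof
      assume "p \<in> cnm_leaves T"
      then have pT: "(r,c) \<in> T" and rm: "\<forall>c'. (r,c') \<in> T \<longrightarrow> c' \<le> c"
        using leaf_iff[OF T] p unfolding cnm_leaves_def by auto
      have r: "r \<in> {1..n}" using CNM_bounds[OF T pT] by simp
      have "c \<le> \<sigma> r" using rowT(2)[OF r] pT by blast
      moreover have "\<sigma> r \<le> c" using rm rowT(1)[OF r] by blast
      ultimately have "c = n + 1 - r" using sig[OF r] by simp
      then show "p \<in> {(i, n + 1 - i) | i. i \<in> {1..n}}" using p r by blast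
    next
      assume "p \<in> {(i, n + 1 - i) | i. i \<in> {1..n}}"
      then have r: "r \<in> {1..n}" and c: "c = n + 1 - r" using p by auto
      then have "p = (r, \<sigma> r)" using sig p by simp
      then show "p \<in> cnm_leaves T" using leaf_iff[OF T rowT(1)[OF r]] rowT(2)[OF r] by simp
    qed
  qed
  then show ?thesis using T unfolding upper_diagonal_CNM_def by simp
qed

lemma main:
  fixes kR kC :: "nat \<Rightarrow> 'k::linorder"
  shows "Inv n T kR kC \<Longrightarrow> \<exists>N::nat. \<exists>Ms :: nat \<Rightarrow> (nat \<times> nat) set.
           Ms 0 = T
         \<and> (\<forall>i\<le>N. CNM n (Ms i))
         \<and> (\<forall>i<N. row_or_col_swap n (Ms i) (Ms (Suc i)))
         \<and> upper_diagonal_CNM n (Ms N)"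
proof (induction "invcount n (<) kR + invcount n (\<lambda>x y. y < x) kC" arbitrary: T kR kC rule: less_induct)
  case less
  have T: "CNM n T" using less.prems unfolding Inv_def by simp
  show ?case
  proof (cases "\<exists>a. 1 \<le> a \<and> a+1 \<le> n \<and> kR a < kR (a+1)")
    case True
    then obtain a where a: "1 \<le> a" "a+1 \<le> n" "kR a < kR (a+1)" by blast
    note st = step_rows[OF less.prems a]
    have "invcount n (<) (kR \<circ> transpose a (a+1)) < invcount n (<) kR"
      using invcount_decrease[of a n "(<)" kR] a by simp
    then obtain N Ms where "Ms 0 = swap_rows a (a+1) T" "\<forall>i\<le>N. CNM n (Ms i)"
         "\<forall>i<N. row_or_col_swap n (Ms i) (Ms (Suc i))" "upper_diagonal_CNM n (Ms N)"
      using less.hyps[OF _ st(1)] by fastforce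
    then show ?thesis using prepend[OF T st(2)] by blast
  next
    case False
    note F1 = False
    show ?thesis
    proof (cases "\<exists>a. 1 \<le> a \<and> a+1 \<le> n \<and> kC (a+1) < kC a")
      case True
      then obtain a where a: "1 \<le> a" "a+1 \<le> n" "kC (a+1) < kC a" by blast
      note st = step_cols[OF less.prems a]
      have "invcount n (\<lambda>x y. y < x) (kC \<circ> transpose a (a+1)) < invcount n (\<lambda>x y. y < x) kC"
        using invcount_decrease[of a n "\<lambda>x y. y < x" kC] a by simp
      then obtain N Ms where "Ms 0 = swap_cols a (a+1) T" "\<forall>i\<le>N. CNM n (Ms i)"
           "\<forall>i<N. row_or_col_swap n (Ms i) (Ms (Suc i))" "upper_diagonal_CNM n (Ms N)"
        using less.hyps[OF _ st(1)] by fastforce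
      then show ?thesis using prepend[OF T st(2)] by blast
    next
      case False
      have "upper_diagonal_CNM n T" using final[OF less.prems] F1 False by blast
      then show ?thesis using T by (intro exI[of _ 0] exI[of _ "\<lambda>_. T"]) simp
    qed
  qed
qed

theorem theorem4p13:
  fixes n :: nat and M :: "(nat \<times> nat) set"
  assumes "n \<ge> 1" and "CNM n M"
  shows "\<exists>N::nat. \<exists>Ms :: nat \<Rightarrow> (nat \<times> nat) set.
           Ms 0 = M
         \<and> (\<forall>i\<le>N. CNM n (Ms i))
         \<and> (\<forall>i<N. row_or_col_swap n (Ms i) (Ms (Suc i)))
         \<and> upper_diagonal_CNM n (Ms N)"
proof -
  note T = assms(2)
  define kR where "kR r = (path M (r, rmax M r), (r, rmax M r))" for r
  define kC where "kC c = (path M (cmax M c, c), (cmax M c, c))" for c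
  have "Inv n M kR kC"
    unfolding Inv_def
  proof (intro conjI allI impI)
    show "CNM n M" using T .
    show "inj_on kR {1..n}" by (rule inj_onI) (simp add: kR_def)
    show "inj_on kC {1..n}" by (rule inj_onI) (simp add: kC_def)
    show "kR s < kR r" if "r < s" "(r,c) \<in> M" "(s,c) \<in> M" for r s c
      using key_rows[OF T that] by (simp add: kR_def)
    show "kC c < kC d" if "c < d" "(r,c) \<in> M" "(r,d) \<in> M" for r c d
      using key_cols[OF T that] by (simp add: kC_def)
    show "kR r = kC c" if h: "(r,c) \<in> M" "\<forall>c'. (r,c') \<in> M \<longrightarrow> c' \<le> c" for r c
    proof -
      have "c \<le> rmax M r" using rmax_props(2)[OF T h(1)] .
      moreover have "rmax M r \<le> c" using h(2) rmax_props(1)[OF T h(1)] by blast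
      ultimately have rc: "rmax M r = c" by simp
      have "r \<le> cmax M c" using cmax_props(2)[OF T h(1)] .
      moreover have "cmax M c \<le> r" using rightmost_bottom[OF T h(1) h(2) cmax_props(1)[OF T h(1)]] .
      ultimately have cr: "cmax M c = r" by simp
      show ?thesis using rc cr by (simp add: kR_def kC_def)
    qed
  qed
  then show ?thesis using main by blast
qed


end
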